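(* Let $n,k,c,d$ be integers with $k\leqslant n<2k-3$, $d<c<k$ and $c+d=n$. Then there exists $M$ such that for every integer $m\geqslant M$ the following holds: every intersecting family $\mathcal{F}\subseteq\{F\in\binom{[m]}{k}\mid |F\cap[n]|=c \text{ or } |F\cap[n]|=d\}$ of maximum cardinality has the form \[ \left\{A\cup B\cup\{t\}\ \middle|\ A\in\binom{[n]\setminus\{t\}}{c-1},\ B\in\binom{[n+1,m]}{k-c}\right\}\cup\left\{A\cup B\cup\{t\}\ \middle|\ A\in\binom{[n]\setminus\{t\}}{d-1},\ B\in\binom{[n+1,m]}{k-d}\right\} \] for some $t\in[n]$, and hence $|\mathcal{F}|=\binom{n-1}{c-1}\binom{m-n}{k-c}+\binom{n-1}{d-1}\binom{m-n}{k-d}$.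
   Context: For positive integers $a\leqslant b$, $[a,b]=\{a,a+1,\dots,b\}$ and $[a]=[1,a]$; $\binom{X}{k}$ denotes the family of all $k$-subsets of a set $X$. A family of sets is intersecting if no two of its members are disjoint. *)

theory Defs
  imports Main
begin

definition ksubsets :: "'a set \<Rightarrow> nat \<Rightarrow> 'a set set" where
  "ksubsets X k = {A. A \<subseteq> X \<and> card A = k}"

definition intersecting :: "'a set set \<Rightarrow> bool" where
  "intersecting F \<longleftrightarrow> (\<forall>A\<in>F. \<forall>B\<in>F. A \<inter> B \<noteq> {})"

definition admissible :: "nat \<Rightarrow> nat \<Rightarrow> nat \<Rightarrow> nat \<Rightarrow> nat \<Rightarrow> nat set set" where
  "admissible m n k c d =
     {F \<in> ksubsets {1..m} k. card (F \<inter> {1..n}) = c \<or> card (F \<inter> {1..n}) = d}"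

definition max_intersecting :: "nat \<Rightarrow> nat \<Rightarrow> nat \<Rightarrow> nat \<Rightarrow> nat \<Rightarrow> nat set set \<Rightarrow> bool" where
  "max_intersecting m n k c d \<F> \<longleftrightarrow>
     \<F> \<subseteq> admissible m n k c d \<and> intersecting \<F> \<and>
     (\<forall>\<G>. \<G> \<subseteq> admissible m n k c d \<and> intersecting \<G> \<longrightarrow> card \<G> \<le> card \<F>)"

end

theory Submission
  imports Defs "HOL-Combinatorics.Multiset_Permutations"
begin

definition arc :: "'a list \<Rightarrow> nat \<Rightarrow> nat \<Rightarrow> 'a set" where
  "arc xs d i = set (take d (rotate i xs))"

lemma set_take_nth: "d \<le> length ys \<Longrightarrow> set (take d ys) = {ys ! j | j. j < d}"
proof
  assume "d \<le> length ys"
  show "set (take d ys) \<subseteq> {ys ! j | j. j < d}"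
    by (auto simp: in_set_conv_nth) blast
  show "{ys ! j | j. j < d} \<subseteq> set (take d ys)"
  proof
    fix x assume "x \<in> {ys ! j | j. j < d}"
    then obtain j where "j < d" "x = ys ! j" by auto
    then have "take d ys ! j = x" "j < length (take d ys)" using \<open>d \<le> length ys\<close> by auto
    then show "x \<in> set (take d ys)" by (metis nth_mem)
  qed
qed

lemma arc_nth:
  assumes "d \<le> length xs"
  shows "arc xs d i = {xs ! ((i + j) mod length xs) | j. j < d}"
proof -
  have "arc xs d i = {rotate i xs ! j | j. j < d}"
    unfolding arc_def using assms by (simp add: set_take_nth)
  also have "\<dots> = {xs ! ((i + j) mod length xs) | j. j < d}"
  proof (intro equalityI subsetI)
    fix x assume "x \<in> {rotate i xs ! j | j. j < d}"
    then obtain j where "j < d" "x = rotate i xs ! j" by auto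
    then show "x \<in> {xs ! ((i + j) mod length xs) | j. j < d}"
      using assms by (auto simp: nth_rotate)
  next
    fix x assume "x \<in> {xs ! ((i + j) mod length xs) | j. j < d}"
    then obtain j where "j < d" "x = xs ! ((i + j) mod length xs)" by auto
    then have "x = rotate i xs ! j" using assms by (simp add: nth_rotate)
    then show "x \<in> {rotate i xs ! j | j. j < d}" using \<open>j < d\<close> by auto
  qed
  finally show ?thesis .
qed

lemma mod_cancel_nat:
  assumes h: "(a + x) mod n = (a + y) mod n" shows "x mod (n::nat) = y mod n"
proof -
  have "(int a + int x) mod int n = (int a + int y) mod int n"
    using h by (metis of_nat_add of_nat_mod)
  hence "(int a + int x - int a) mod int n = (int a + int y - int a) mod int n"
    by (rule mod_diff_cong) (rule refl)
  hence "int x mod int n = int y mod int n" by simp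
  thus ?thesis by (metis of_nat_eq_iff of_nat_mod)
qed

lemma mod_two_cases:
  assumes "x mod n = y mod n" "x < n" "y < 2*n" shows "y = x \<or> y = x + (n::nat)"
proof -
  have n: "n > 0" using assms(2) by simp
  have "y mod n = x" using assms(1,2) by simp
  moreover have "y div n < 2" using assms(3) n by (simp add: div_less_iff_less_mult mult.commute)
  moreover have "y = y div n * n + y mod n" by simp
  ultimately show ?thesis
    by (cases "y div n") (auto simp: less_Suc_eq)
qed

lemma arcs_meet:
  assumes "distinct xs" "length xs = n" "d \<le> n" "arc xs d a \<inter> arc xs d b \<noteq> {}"
  shows "\<exists>j j'. j < d \<and> j' < d \<and> (a + j) mod n = (b + j') mod n"
proof -
  obtain z where z: "z \<in> arc xs d a" "z \<in> arc xs d b" using assms(4) by blast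
  obtain j where j: "j < d" "z = xs ! ((a + j) mod n)" using z(1) assms(2,3) by (auto simp: arc_nth)
  obtain j' where j': "j' < d" "z = xs ! ((b + j') mod n)" using z(2) assms(2,3) by (auto simp: arc_nth)
  have n: "n > 0" using j(1) assms(3) by simp
  have "(a + j) mod n = (b + j') mod n"
    using j j' assms(1,2) n by (metis mod_less_divisor nth_eq_iff_index_eq)
  then show ?thesis using j j' by blast
qed

lemma J_bound:
  fixes J :: "nat set"
  assumes J: "J \<subseteq> {..<n}" "0 \<in> J" "2*d \<le> n" "1 \<le> d"
    and P1: "\<And>s. s \<in> J \<Longrightarrow> s < d \<or> n - d < s"
    and P2: "\<And>t. 1 \<le> t \<Longrightarrow> t < d \<Longrightarrow> t \<in> J \<Longrightarrow> t + (n - d) \<notin> J"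
  shows "card J \<le> d \<and> (1 \<notin> J \<longrightarrow> 1 + (n - d) \<notin> J \<longrightarrow> 2 \<le> d \<longrightarrow> card J \<le> d - 1)"
proof -
  define Lo where "Lo = J \<inter> {1..<d}"
  define Hi where "Hi = J \<inter> {n-d<..<n}"
  define f where "f = (\<lambda>s::nat. s - (n - d))"
  have fin: "finite Lo" "finite Hi" by (auto simp: Lo_def Hi_def)
  have JU: "J \<subseteq> insert 0 (Lo \<union> Hi)"
    using J P1 by (force simp: Lo_def Hi_def)
  have cJ: "card J \<le> 1 + card Lo + card Hi"
  proof -
    have "card J \<le> card (insert 0 (Lo \<union> Hi))" by (rule card_mono) (use fin JU in auto)
    also have "\<dots> \<le> Suc (card (Lo \<union> Hi))" by (simp add: card_insert_le_m1 fin card_insert_if)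
    also have "\<dots> \<le> Suc (card Lo + card Hi)" using card_Un_le[of Lo Hi] by simp
    finally show ?thesis by simp
  qed
  have injf: "inj_on f Hi" unfolding inj_on_def f_def Hi_def by auto
  have fHi: "f ` Hi \<subseteq> {1..<d} - Lo"
  proof
    fix u assume "u \<in> f ` Hi"
    then obtain s where s: "s \<in> Hi" "u = f s" by auto
    have "s \<in> J" "n - d < s" "s < n" using s(1) by (auto simp: Hi_def)
    then have u1: "1 \<le> u" "u < d" "u + (n - d) = s" using s(2) J(3) by (auto simp: f_def)
    then have "u \<notin> J" using P2 \<open>s \<in> J\<close> by metis
    then show "u \<in> {1..<d} - Lo" using u1 by (auto simp: Lo_def)
  qed
  have cLo: "card Lo \<le> d - 1" using card_mono[of "{1..<d}" Lo] by (auto simp: Lo_def)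
  have cHi: "card Hi \<le> (d - 1) - card Lo"
  proof -
    have "card Hi = card (f ` Hi)" using injf by (simp add: card_image)
    also have "\<dots> \<le> card ({1..<d} - Lo)" by (rule card_mono) (use fHi in auto)
    also have "\<dots> = (d - 1) - card Lo" by (subst card_Diff_subset) (auto simp: Lo_def)
    finally show ?thesis .
  qed
  have part1: "card J \<le> d" using cJ cLo cHi J(4) by linarith
  have part2: "card J \<le> d - 1" if h: "1 \<notin> J" "1 + (n - d) \<notin> J" "2 \<le> d"
  proof -
    have fHi2: "f ` Hi \<subseteq> ({1..<d} - Lo) - {1}"
    proof
      fix u assume u: "u \<in> f ` Hi"
      then obtain s where s: "s \<in> Hi" "u = f s" by auto
      have "s \<in> J" "n - d < s" using s(1) by (auto simp: Hi_def)
      have "u \<noteq> 1"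
      proof
        assume "u = 1"
        then have "s = 1 + (n - d)" using s(2) \<open>n - d < s\<close> unfolding f_def by arith
        then show False using h(2) \<open>s \<in> J\<close> by simp
      qed
      then show "u \<in> ({1..<d} - Lo) - {1}" using fHi u by auto
    qed
    have "card Hi = card (f ` Hi)" using injf by (simp add: card_image)
    also have "\<dots> \<le> card (({1..<d} - Lo) - {1})" by (rule card_mono) (use fHi2 in auto)
    also have "\<dots> = (d - 1) - card Lo - 1"
      using h by (subst card_Diff_singleton) (auto simp: Lo_def card_Diff_subset)
    finally have "card Hi \<le> (d - 1) - card Lo - 1" .
    moreover have "card Lo \<le> card ({1..<d} - {1})"
      by (rule card_mono) (use h(1) in \<open>auto simp: Lo_def\<close>)
    moreover have "card ({1..<d} - {1}) = d - 2" using h(3) by simp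
    ultimately show ?thesis using cJ h(3) by linarith
  qed
  show ?thesis using part1 part2 by blast
qed

lemma cycle_bound:
  assumes xs: "distinct xs" "length xs = n" and d: "1 \<le> d" "2*d \<le> n" and A: "intersecting A"
    and i0: "i0 < n" "arc xs d i0 \<in> A"
  shows "card {i. i < n \<and> arc xs d i \<in> A} \<le> d \<and>
    (arc xs d ((i0+1) mod n) \<notin> A \<longrightarrow> arc xs d ((i0 + (1 + (n-d))) mod n) \<notin> A \<longrightarrow> 2 \<le> d
       \<longrightarrow> card {i. i < n \<and> arc xs d i \<in> A} \<le> d - 1)"
proof -
  define I where "I = {i. i < n \<and> arc xs d i \<in> A}"
  define J where "J = {s. s < n \<and> (i0 + s) mod n \<in> I}"
  have n: "n > 0" using i0 by simp
  have dn: "d \<le> n" using d by simp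
  define g where "g = (\<lambda>s. (i0 + s) mod n)"
  have img: "g ` J = I"
  proof (intro equalityI subsetI)
    fix x assume "x \<in> g ` J" then show "x \<in> I" by (auto simp: J_def g_def)
  next
    fix i assume i: "i \<in> I"
    define s where "s = (i + (n - i0)) mod n"
    have "(i0 + s) mod n = (i0 + (i + (n - i0))) mod n" unfolding s_def by (rule mod_add_right_eq)
    also have "i0 + (i + (n - i0)) = i + n" using i0 by simp
    also have "(i + n) mod n = i" using i by (simp add: I_def)
    finally have gs: "g s = i" by (simp add: g_def)
    moreover have "s < n" using n by (simp add: s_def)
    ultimately have "s \<in> J" using i by (simp add: J_def g_def)
    then show "i \<in> g ` J" using gs by (metis image_eqI)
  qed
  have inj: "inj_on g J"
  proof (rule inj_onI)
    fix s s' assume ss: "s \<in> J" "s' \<in> J" "g s = g s'"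
    have "s mod n = s' mod n" using ss(3) unfolding g_def by (rule mod_cancel_nat)
    then show "s = s'" using ss by (simp add: J_def)
  qed
  have cJ: "card J = card I" using card_image[OF inj] img by simp
  have meet: "arc xs d a \<inter> arc xs d b \<noteq> {}" if "arc xs d a \<in> A" "arc xs d b \<in> A" for a b
    using A that unfolding intersecting_def by blast
  have P1: "s < d \<or> n - d < s" if s: "s \<in> J" for s
  proof -
    have "arc xs d i0 \<inter> arc xs d ((i0+s) mod n) \<noteq> {}" using meet i0 s by (auto simp: J_def I_def)
    then obtain j j' where jj: "j < d" "j' < d" "(i0 + j) mod n = ((i0+s) mod n + j') mod n"
      using arcs_meet[OF xs dn] by blast
    have "(i0 + j) mod n = (i0 + (s + j')) mod n" using jj(3) by (simp add: mod_add_left_eq add.assoc)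
    then have "j mod n = (s + j') mod n" by (rule mod_cancel_nat)
    moreover have "s < n" using s by (simp add: J_def)
    ultimately have "s + j' = j \<or> s + j' = j + n" using mod_two_cases[of j n "s + j'"] jj d by simp
    then show ?thesis using jj by auto
  qed
  have P2: "t + (n - d) \<notin> J" if t: "1 \<le> t" "t < d" "t \<in> J" for t
  proof
    assume t2: "t + (n - d) \<in> J"
    have "arc xs d ((i0+t) mod n) \<inter> arc xs d ((i0 + (t + (n-d))) mod n) \<noteq> {}"
      using meet t t2 by (auto simp: J_def I_def)
    then obtain j j' where jj: "j < d" "j' < d"
      "((i0+t) mod n + j) mod n = ((i0 + (t + (n-d))) mod n + j') mod n"
      using arcs_meet[OF xs dn] by blast
    have "((i0 + t) + j) mod n = ((i0 + t) + ((n - d) + j')) mod n"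
      using jj(3) by (simp add: mod_add_left_eq add.assoc)
    then have "j mod n = ((n - d) + j') mod n" by (rule mod_cancel_nat)
    then have "(n-d) + j' = j \<or> (n - d) + j' = j + n" using mod_two_cases[of j n "(n-d) + j'"] jj d by simp
    then show False using jj d by auto
  qed
  have Jsub: "J \<subseteq> {..<n}" by (auto simp: J_def)
  have J0: "0 \<in> J" using i0 by (simp add: J_def I_def)
  have main: "card J \<le> d \<and> (1 \<notin> J \<longrightarrow> 1 + (n-d) \<notin> J \<longrightarrow> 2 \<le> d \<longrightarrow> card J \<le> d - 1)"
    by (rule J_bound[OF Jsub J0 d(2) d(1) P1 P2])
  have e1: "1 \<notin> J" if "arc xs d ((i0+1) mod n) \<notin> A" using that by (simp add: J_def I_def)
  have e2: "1 + (n-d) \<notin> J" if "arc xs d ((i0 + (1 + (n-d))) mod n) \<notin> A" using that by (simp add: J_def I_def)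
  have c1: "card I \<le> d" using main cJ by simp
  have c2: "card I \<le> d - 1" if "arc xs d ((i0+1) mod n) \<notin> A"
     "arc xs d ((i0 + (1 + (n-d))) mod n) \<notin> A" "2 \<le> d"
    using main cJ e1[OF that(1)] e2[OF that(2)] that(3) by simp
  show ?thesis using c1 c2 unfolding I_def by blast
qed

lemma count_prefix:
  assumes X: "finite X" "F \<subseteq> X" "card F = d"
  shows "card {xs \<in> permutations_of_set X. set (take d xs) = F} = fact d * fact (card X - d)"
proof -
  let ?g = "\<lambda>(ys, zs). ys @ zs"
  let ?D = "permutations_of_set F \<times> permutations_of_set (X - F)"
  have finF: "finite F" using X finite_subset by blast
  have img: "?g ` ?D = {xs \<in> permutations_of_set X. set (take d xs) = F}"
  proof (intro equalityI subsetI)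
    fix xs assume "xs \<in> ?g ` ?D"
    then obtain ys zs where yz: "ys \<in> permutations_of_set F" "zs \<in> permutations_of_set (X-F)" "xs = ys @ zs" by auto
    then have h: "set ys = F" "distinct ys" "set zs = X - F" "distinct zs" by (auto simp: permutations_of_set_def)
    have "length ys = d" using distinct_card[OF h(2)] h(1) X(3) by simp
    then show "xs \<in> {xs \<in> permutations_of_set X. set (take d xs) = F}"
      using h yz(3) X(2) by (auto simp: permutations_of_set_def)
  next
    fix xs assume xs: "xs \<in> {xs \<in> permutations_of_set X. set (take d xs) = F}"
    then have h: "distinct xs" "set xs = X" "set (take d xs) = F" by (auto simp: permutations_of_set_def)
    have dt: "distinct (take d xs)" "distinct (drop d xs)" using h(1) by auto
    have disj: "set (take d xs) \<inter> set (drop d xs) = {}"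
      using h(1) by (metis append_take_drop_id distinct_append)
    have un: "set (take d xs) \<union> set (drop d xs) = X" using h(2) by (metis append_take_drop_id set_append)
    have "set (drop d xs) = X - F" using disj un h(3) by blast
    then have "(take d xs, drop d xs) \<in> ?D" using dt h(3) by (simp add: permutations_of_set_def)
    then show "xs \<in> ?g ` ?D" by (intro image_eqI[of _ _ "(take d xs, drop d xs)"]) auto
  qed
  have inj: "inj_on ?g ?D"
  proof (rule inj_onI)
    fix p q assume pq: "p \<in> ?D" "q \<in> ?D" "?g p = ?g q"
    obtain ys zs where p: "p = (ys, zs)" by (cases p)
    obtain ys' zs' where q: "q = (ys', zs')" by (cases q)
    have a: "ys @ zs = ys' @ zs'" using pq(3) p q by simp
    have "set ys = F" "distinct ys" "set ys' = F" "distinct ys'" using pq(1,2) p q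
      by (auto simp: permutations_of_set_def)
    then have "length ys = length ys'" using distinct_card by metis
    then show "p = q" using a p q by simp
  qed
  have "card {xs \<in> permutations_of_set X. set (take d xs) = F} = card ?D"
    using card_image[OF inj] img by simp
  also have "\<dots> = fact d * fact (card X - d)"
    using X finF by (simp add: card_cartesian_product card_Diff_subset)
  finally show ?thesis .
qed

lemma perm_length: "xs \<in> permutations_of_set X \<Longrightarrow> length xs = card X"
  by (auto simp: permutations_of_set_def distinct_card)

lemma rot_count:
  assumes X: "finite X" "card X = n" "i < n"
  shows "card {xs \<in> permutations_of_set X. arc xs d i \<in> A} = card {xs \<in> permutations_of_set X. arc xs d 0 \<in> A}"
proof -
  let ?L = "{xs \<in> permutations_of_set X. arc xs d i \<in> A}"
  let ?R = "{xs \<in> permutations_of_set X. arc xs d 0 \<in> A}"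
  have arot: "arc (rotate i xs) d 0 = arc xs d i" for xs by (simp add: arc_def)
  have bk1: "rotate i (rotate (n - i) ys) = ys" if "length ys = n" for ys
    using that X(3) by (simp add: rotate_rotate)
  have bk2: "rotate (n - i) (rotate i ys) = ys" if "length ys = n" for ys
    using that X(3) by (simp add: rotate_rotate)
  have img: "rotate i ` ?L = ?R"
  proof (intro equalityI subsetI)
    fix ys assume "ys \<in> rotate i ` ?L"
    then show "ys \<in> ?R" by (auto simp: permutations_of_set_def arot)
  next
    fix ys assume ys: "ys \<in> ?R"
    have len: "length ys = n" using ys perm_length X by auto
    have "rotate (n - i) ys \<in> ?L"
      using ys bk1[OF len] arot[of "rotate (n - i) ys"] by (auto simp: permutations_of_set_def)
    then show "ys \<in> rotate i ` ?L" using bk1[OF len] by (metis image_eqI)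
  qed
  have inj: "inj_on (rotate i) ?L"
  proof (rule inj_onI)
    fix xs ys assume h: "xs \<in> ?L" "ys \<in> ?L" "rotate i xs = rotate i ys"
    have "length xs = n" "length ys = n" using h(1,2) perm_length X by auto
    then show "xs = ys" using h(3) bk2 by metis
  qed
  show ?thesis using card_image[OF inj] img by simp
qed

lemma binom_identity:
  assumes "1 \<le> d" "d \<le> n"
  shows "(n - 1 choose (d - 1)) * (n * (fact d * fact (n - d))) = d * (fact n :: nat)"
proof -
  have n: "n \<ge> 1" using assms by simp
  have e1: "n * (n - 1 choose (d - 1)) = (n choose d) * d"
    using Suc_times_binomial_eq[of "n - 1" "d - 1"] assms n by simp
  have e2: "fact d * fact (n - d) * (n choose d) = (fact n :: nat)"
    using binomial_fact_lemma[OF assms(2)] by simp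
  have "(n - 1 choose (d - 1)) * (n * (fact d * fact (n - d))) = (n * (n - 1 choose (d - 1))) * (fact d * fact (n - d))"
    by (simp add: ac_simps)
  also have "\<dots> = d * (fact d * fact (n - d) * (n choose d))" using e1 by (simp add: ac_simps)
  also have "\<dots> = d * fact n" using e2 by simp
  finally show ?thesis .
qed

lemma card_filter_sum2: "finite S \<Longrightarrow> card {x \<in> S. P x} = (\<Sum>x\<in>S. of_bool (P x) :: nat)"
proof -
  assume fin: "finite S"
  have "card {x \<in> S. P x} = (\<Sum>x\<in>{x \<in> S. P x}. 1::nat)" by simp
  also have "\<dots> = (\<Sum>x\<in>S. if P x then 1 else 0)" by (rule sum.inter_filter[OF fin])
  also have "\<dots> = (\<Sum>x\<in>S. of_bool (P x))" by (rule sum.cong) auto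
  finally show ?thesis .
qed

lemma card_filter_sum: "card {i. i < (n::nat) \<and> P i} = (\<Sum>i<n. of_bool (P i) :: nat)"
proof -
  have "card {i. i < n \<and> P i} = card {i \<in> {..<n}. P i}" by (rule arg_cong[where f=card]) auto
  also have "\<dots> = (\<Sum>i<n. of_bool (P i) :: nat)" by (rule card_filter_sum2) simp
  finally show ?thesis .
qed

lemma katona_sum:
  assumes X: "finite X" "card X = n" and d: "1 \<le> d" "2*d \<le> n" and A: "A \<subseteq> ksubsets X d"
  shows "(\<Sum>xs\<in>permutations_of_set X. card {i. i < n \<and> arc xs d i \<in> A})
           = n * (card A * (fact d * fact (n - d)))"
proof -
  let ?P = "permutations_of_set X"
  have "A \<subseteq> Pow X" using A unfolding ksubsets_def by auto
  then have finA: "finite A" using X(1) by (rule finite_subset[OF _ finite_Pow_iff[THEN iffD2]])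
  have c0: "card {xs \<in> ?P. arc xs d 0 \<in> A} = card A * (fact d * fact (n - d))"
  proof -
    have eq: "{xs \<in> ?P. arc xs d 0 \<in> A} = (\<Union>F\<in>A. {xs \<in> ?P. set (take d xs) = F})"
      by (auto simp: arc_def)
    have "card (\<Union>F\<in>A. {xs \<in> ?P. set (take d xs) = F}) = (\<Sum>F\<in>A. card {xs \<in> ?P. set (take d xs) = F})"
      by (rule card_UN_disjoint) (use finA in auto)
    also have "\<dots> = (\<Sum>F\<in>A. fact d * fact (n - d))"
    proof (rule sum.cong[OF refl])
      fix F assume "F \<in> A"
      then have "F \<subseteq> X" "card F = d" using A by (auto simp: ksubsets_def)
      then show "card {xs \<in> ?P. set (take d xs) = F} = fact d * fact (n - d)"
        using count_prefix[OF X(1)] X(2) by simp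
    qed
    also have "\<dots> = card A * (fact d * fact (n - d))" by simp
    finally show ?thesis using eq by simp
  qed
  have "(\<Sum>xs\<in>?P. card {i. i < n \<and> arc xs d i \<in> A})
      = (\<Sum>xs\<in>?P. \<Sum>i<n. of_bool (arc xs d i \<in> A))"
    by (simp only: card_filter_sum)
  also have "\<dots> = (\<Sum>i<n. \<Sum>xs\<in>?P. of_bool (arc xs d i \<in> A))"
    by (rule sum.swap)
  also have "\<dots> = (\<Sum>i<n. card {xs \<in> ?P. arc xs d i \<in> A})"
    by (simp only: card_filter_sum2[OF finite_permutations_of_set])
  also have "\<dots> = (\<Sum>i<n. card {xs \<in> ?P. arc xs d 0 \<in> A})"
    by (rule sum.cong[OF refl]) (rule rot_count[OF X], simp)
  also have "\<dots> = n * (card A * (fact d * fact (n - d)))" using c0 by simp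
  finally show ?thesis .
qed

lemma katona:
  assumes X: "finite X" "card X = n" and d: "1 \<le> d" "2*d \<le> n"
    and A: "A \<subseteq> ksubsets X d" "intersecting A"
  shows "card A \<le> (n - 1 choose (d - 1))
     \<and> ((\<exists>xs \<in> permutations_of_set X. card {i. i < n \<and> arc xs d i \<in> A} < d)
           \<longrightarrow> card A < (n - 1 choose (d - 1)))"
proof -
  let ?P = "permutations_of_set X"
  let ?cnt = "\<lambda>xs. card {i. i < n \<and> arc xs d i \<in> A}"
  let ?Q = "n * (fact d * fact (n - d)) :: nat"
  have Qpos: "?Q > 0" using d by simp
  have le: "?cnt xs \<le> d" if xs: "xs \<in> ?P" for xs
  proof (cases "{i. i < n \<and> arc xs d i \<in> A} = {}")
    case True then show ?thesis by (metis card.empty zero_le)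
  next
    case False
    then obtain i0 where i0: "i0 < n" "arc xs d i0 \<in> A" by auto
    have "distinct xs" "length xs = n" using xs X perm_length by (auto simp: permutations_of_set_def)
    from cycle_bound[OF this d A(2) i0] show ?thesis by (rule conjunct1)
  qed
  have S: "(\<Sum>xs\<in>?P. ?cnt xs) = card A * ?Q" using katona_sum[OF X d A(1)] by (simp add: ac_simps)
  have B: "(n - 1 choose (d - 1)) * ?Q = d * fact n" using binom_identity d by simp
  have sumd: "(\<Sum>xs\<in>?P. d) = d * fact n" using X by simp
  have "(\<Sum>xs\<in>?P. ?cnt xs) \<le> (\<Sum>xs\<in>?P. d)" by (rule sum_mono) (rule le)
  then have "card A * ?Q \<le> (n - 1 choose (d - 1)) * ?Q"
    by (simp only: S B sumd)
  then have c1: "card A \<le> (n - 1 choose (d - 1))" using Qpos by simp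
  have c2: "card A < (n - 1 choose (d - 1))" if "\<exists>xs \<in> ?P. ?cnt xs < d"
  proof -
    have "(\<Sum>xs\<in>?P. ?cnt xs) < (\<Sum>xs\<in>?P. d)"
      by (rule sum_strict_mono_ex1) (use le that in auto)
    then have "card A * ?Q < (n - 1 choose (d - 1)) * ?Q" by (simp only: S B sumd)
    then show ?thesis using Qpos by simp
  qed
  show ?thesis using c1 c2 by blast
qed

lemma exists_perm: "finite S \<Longrightarrow> \<exists>xs. distinct xs \<and> set xs = S"
  using finite_distinct_list by blast

lemma defect:
  assumes X: "finite X" "card X = n" and d: "2 \<le> d" "2*d \<le> n"
    and A: "A \<subseteq> ksubsets X d" "intersecting A"
    and F: "F \<in> A" "x \<in> F" "y \<in> X - F" "V \<subseteq> X - F - {y}" "card V = d - 1"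
    and n1: "insert y (F - {x}) \<notin> A" "insert x V \<notin> A"
  shows "card A < (n - 1 choose (d - 1))"
proof -
  have FX: "F \<subseteq> X" "card F = d" using F(1) A(1) by (auto simp: ksubsets_def)
  have finF: "finite F" using FX X finite_subset by blast
  obtain fl where fl: "distinct fl" "set fl = F - {x}" using exists_perm[of "F - {x}"] finF by auto
  obtain vl where vl: "distinct vl" "set vl = V" using exists_perm[of V] X F(4) finite_subset
    by (metis finite_Diff)
  obtain rl where rl: "distinct rl" "set rl = X - F - {y} - V" using exists_perm[of "X - F - {y} - V"] X by auto
  have lfl: "length fl = d - 1" using distinct_card[OF fl(1)] fl(2) FX finF F(2) by simp
  have lvl: "length vl = d - 1" using distinct_card[OF vl(1)] vl(2) F(5) by simp
  have cXF0: "card (X - F) = n - d" using FX X finF by (simp add: card_Diff_subset)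
  have cXF: "card (X - F - {y}) = n - d - 1" using cXF0 F(3) X by (simp add: card_Diff_singleton)
  have lrl: "length rl = n - 2*d"
  proof -
    have "card (X - F - {y} - V) = (n - d - 1) - (d - 1)"
      using cXF F(4,5) X by (simp add: card_Diff_subset finite_subset)
    then show ?thesis using distinct_card[OF rl(1)] rl(2) d by simp
  qed
  define xs where "xs = x # fl @ y # rl @ vl"
  have dxs: "distinct xs" using fl vl rl F(2,3,4) by (auto simp: xs_def)
  have sxs: "set xs = X" using fl vl rl F(2,3,4) FX by (auto simp: xs_def)
  have lxs: "length xs = n" using lfl lrl lvl d by (simp add: xs_def)
  have a0: "arc xs d 0 = F"
  proof -
    have "take d xs = x # fl" using lfl d by (cases d) (simp_all add: xs_def)
    then show ?thesis using fl F(2) by (auto simp: arc_def)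
  qed
  have a1: "arc xs d ((0+1) mod n) \<notin> A"
  proof -
    have n: "1 < n" using d by simp
    have "rotate 1 xs = fl @ y # rl @ vl @ [x]" by (simp add: xs_def)
    then have "take d (rotate 1 xs) = fl @ [y]" using lfl d by simp
    then have "arc xs d 1 = insert y (F - {x})" using fl by (auto simp: arc_def)
    then show ?thesis using n n1(1) by simp
  qed
  have a2: "arc xs d ((0 + (1 + (n - d))) mod n) \<notin> A"
  proof -
    let ?k = "1 + (n - d)"
    have k: "?k < n" "?k mod n = ?k" using d by auto
    have "rotate ?k xs = drop ?k xs @ take ?k xs" using k lxs by (simp add: rotate_drop_take)
    moreover have kl: "?k = length (x # fl @ y # rl)" using lfl lrl d by simp
    moreover have "drop (length (x # fl @ y # rl)) xs = vl" "take (length (x # fl @ y # rl)) xs = x # fl @ y # rl"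
      unfolding xs_def by (metis append_Cons append_assoc append_eq_conv_conj)+
    ultimately have "rotate ?k xs = vl @ x # fl @ y # rl" by simp
    then have "take d (rotate ?k xs) = vl @ [x]" using lvl d by simp
    then have "arc xs d ?k = insert x V" using vl by (auto simp: arc_def)
    then show ?thesis using n1(2) k by simp
  qed
  have n0: "0 < n" using d by simp
  have "card {i. i < n \<and> arc xs d i \<in> A} \<le> d - 1"
    using cycle_bound[OF dxs lxs _ d(2) A(2) n0] a0 F(1) a1 a2 d by simp
  then have "\<exists>xs \<in> permutations_of_set X. card {i. i < n \<and> arc xs d i \<in> A} < d"
    using dxs sxs d by (intro bexI[of _ xs]) (auto simp: permutations_of_set_def)
  then show ?thesis using katona[OF X _ d(2) A] d by simp
qed

lemma walk:
  assumes "finite X" "F \<in> A" "D \<notin> A" "F \<subseteq> X" "D \<subseteq> X" "card F = card D"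
  shows "\<exists>G\<in>A. \<exists>x\<in>G. \<exists>y\<in>X - G. insert y (G - {x}) \<notin> A"
  using assms
proof (induction "card (F - D)" arbitrary: F)
  case 0
  have finF: "finite F" "finite D" using 0 finite_subset by blast+
  then have "F \<subseteq> D" using 0 by simp
  then have "F = D" using card_subset_eq[OF finF(2)] 0 by simp
  then show ?case using 0 by simp
next
  case (Suc k)
  have finF: "finite F" "finite D" using Suc finite_subset by blast+
  obtain x where x: "x \<in> F - D" using Suc.hyps(2) by (metis card.empty empty_iff nat.distinct(1) ex_in_conv)
  have "card (D - F) = card (F - D)"
  proof -
    have "card (F - D) = card F - card (F \<inter> D)" using finF by (metis card_Diff_subset_Int finite_Int Diff_Int2 inf.idem)
    moreover have "card (D - F) = card D - card (D \<inter> F)" using finF by (metis card_Diff_subset_Int finite_Int Diff_Int2 inf.idem)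
    ultimately show ?thesis using Suc.prems(6) by (simp add: Int_commute)
  qed
  then obtain y where y: "y \<in> D - F" using Suc.hyps(2) by (metis card.empty empty_iff nat.distinct(1) ex_in_conv)
  show ?case
  proof (cases "insert y (F - {x}) \<in> A")
    case False
    then show ?thesis using Suc.prems x y by blast
  next
    case True
    let ?F = "insert y (F - {x})"
    have "?F - D = (F - D) - {x}" using x y by auto
    then have "k = card (?F - D)" using Suc.hyps(2) x finF by simp
    moreover have "?F \<subseteq> X" using Suc.prems x y by auto
    moreover have "card ?F = card D"
    proof -
      have "card D > 0" using y finF card_gt_0_iff by blast
      then show ?thesis using Suc.prems(6) x y finF by (simp add: card_insert_if)
    qed
    ultimately show ?thesis using Suc.hyps(1)[of ?F] Suc.prems True by blast
  qed
qed

theorem ekr_star: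
  assumes X: "finite X" "card X = n" and d: "1 \<le> d" "2*d + 1 \<le> n"
    and A: "A \<subseteq> ksubsets X d" "intersecting A" "(n - 1 choose (d - 1)) \<le> card A"
  shows "\<exists>t\<in>X. \<forall>D. D \<subseteq> X \<and> card D = d \<and> t \<in> D \<longrightarrow> D \<in> A"
proof -
  have Cpos: "(n - 1 choose (d - 1)) > 0" using d by simp
  then have "A \<noteq> {}" using A(3) by auto
  then obtain F0 where F0: "F0 \<in> A" by blast
  have F0X: "F0 \<subseteq> X" "card F0 = d" using F0 A(1) by (auto simp: ksubsets_def)
  have finF0: "finite F0" using F0X X finite_subset by blast
  have AX: "B \<subseteq> X \<and> card B = d" if "B \<in> A" for B using that A(1) by (auto simp: ksubsets_def)
  show ?thesis
  proof (cases "d = 1")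
    case True
    then have "card F0 = 1" using F0X by simp
    then obtain t where t: "F0 = {t}" by (rule card_1_singletonE)
    have "t \<in> X" using t F0X by auto
    moreover have "D \<in> A" if "D \<subseteq> X \<and> card D = d \<and> t \<in> D" for D
    proof -
      have "card D = 1" using that True by simp
      then obtain s where "D = {s}" by (rule card_1_singletonE)
      then have "D = F0" using that t by auto
      then show ?thesis using F0 by simp
    qed
    ultimately show ?thesis by blast
  next
    case False
    then have d2: "2 \<le> d" using d by simp
    have d2n: "2*d \<le> n" using d by simp
    have S: "insert y (F - {x}) \<in> A \<or> insert x V \<in> A"
      if "F \<in> A" "x \<in> F" "y \<in> X - F" "V \<subseteq> X - F - {y}" "card V = d - 1" for F x y V
    proof (rule ccontr)
      assume "\<not> (insert y (F - {x}) \<in> A \<or> insert x V \<in> A)"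
      then have "card A < (n - 1 choose (d - 1))"
        using defect[OF X d2 d2n A(1) A(2) that] by blast
      then show False using A(3) by simp
    qed
    have cXF0: "card (X - F0) = n - d" using F0X X finF0 by (simp add: card_Diff_subset)
    have "d \<le> card (X - F0)" using cXF0 d by simp
    then obtain D0 where D0: "D0 \<subseteq> X - F0" "card D0 = d" "finite D0" by (rule obtain_subset_with_card_n)
    have "D0 \<noteq> {}" using D0 d by auto
    then have D0A: "D0 \<notin> A" using A(2) F0 D0(1) unfolding intersecting_def by blast
    obtain G a u where G: "G \<in> A" "a \<in> G" "u \<in> X - G" "insert u (G - {a}) \<notin> A"
      using walk[OF X(1) F0 D0A F0X(1)] D0 F0X by auto
    have GX: "G \<subseteq> X" "card G = d" using AX[OF G(1)] by auto
    have finG: "finite G" using GX X finite_subset by blast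
    define W where "W = X - G - {u}"
    have base: "insert a V \<in> A" if "V \<subseteq> W" "card V = d - 1" for V
      using S[OF G(1,2,3)] G(4) that by (auto simp: W_def)
    have cW: "card W = n - d - 1"
    proof -
      have "card (X - G) = n - d" using GX X finG by (simp add: card_Diff_subset)
      then show ?thesis using G(3) X by (simp add: W_def card_Diff_singleton)
    qed
    have finW: "finite W" using X by (simp add: W_def)
    have aX: "a \<in> X" using G GX by auto
    have aW: "a \<notin> W" using G(2) by (simp add: W_def)
    have main: "\<forall>H. H \<subseteq> X \<and> card H = d \<and> a \<in> H \<and> card (H - insert a W) \<le> j \<longrightarrow> H \<in> A" for j
    proof (induction j)
      case 0
      show ?case
      proof (intro allI impI)
        fix H assume H: "H \<subseteq> X \<and> card H = d \<and> a \<in> H \<and> card (H - insert a W) \<le> 0"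
        have finH: "finite H" using H X finite_subset by blast
        then have "H - insert a W = {}" using H by simp
        then have "H - {a} \<subseteq> W" by auto
        moreover have "card (H - {a}) = d - 1" using H finH by simp
        ultimately have "insert a (H - {a}) \<in> A" by (rule base)
        then show "H \<in> A" using H by (simp add: insert_absorb)
      qed
    next
      case (Suc j)
      show ?case
      proof (intro allI impI)
        fix H assume H: "H \<subseteq> X \<and> card H = d \<and> a \<in> H \<and> card (H - insert a W) \<le> Suc j"
        have finH: "finite H" using H X finite_subset by blast
        show "H \<in> A"
        proof (cases "card (H - insert a W) \<le> j")
          case True then show ?thesis using Suc.IH H by blast
        next
          case False
          then have cH: "card (H - insert a W) = Suc j" using H by simp
          then obtain w where w: "w \<in> H - insert a W" by (metis card.empty empty_iff nat.distinct(1) ex_in_conv)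
          have wX: "w \<in> X" "w \<notin> W" "w \<noteq> a" using w H by auto
          have cWH: "2 \<le> card (W - H)"
          proof -
            have "W \<inter> H \<subseteq> H - {a, w}" using w aW by auto
            then have "card (W \<inter> H) \<le> card (H - {a, w})" by (rule card_mono[rotated]) (use finH in simp)
            also have "card (H - {a, w}) = d - 2" using H w finH by (auto simp: card_Diff_subset card_insert_if numeral_2_eq_2)
            finally have "card (W \<inter> H) \<le> d - 2" .
            moreover have "card (W - H) = card W - card (W \<inter> H)"
              using finW by (simp add: card_Diff_subset_Int)
            ultimately show ?thesis using cW d d2 by arith
          qed
          obtain v where v: "v \<in> W - H" using cWH by (metis card.empty empty_iff not_numeral_le_zero ex_in_conv)
          have "card (W - H - {v}) \<ge> 1" using cWH v finW by (simp add: card_Diff_singleton)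
          then obtain z where z: "z \<in> W - H - {v}" by (metis card.empty empty_iff not_one_le_zero ex_in_conv)
          have vX: "v \<in> X" "v \<noteq> w" "v \<noteq> a" "v \<noteq> z" using v z wX aW by (auto simp: W_def)
          have zX: "z \<in> X" "z \<noteq> w" "z \<noteq> a" using z wX aW by (auto simp: W_def)
          define H0 where "H0 = insert v (H - {w})"
          define H1 where "H1 = insert z (H - {w})"
          have IHapp: "insert q (H - {w}) \<in> A" if q: "q \<in> W - H" for q
          proof -
            have qX: "q \<in> X" "q \<noteq> w" "q \<notin> H" using q wX by (auto simp: W_def)
            have "insert q (H - {w}) - insert a W = (H - insert a W) - {w}" using q by auto
            then have "card (insert q (H - {w}) - insert a W) = j" using cH w finH by simp
            moreover have "card (insert q (H - {w})) = d" using H w qX finH d2 by simp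
            moreover have "insert q (H - {w}) \<subseteq> X" using H qX by auto
            moreover have "a \<in> insert q (H - {w})" using H wX by auto
            ultimately show ?thesis using Suc.IH by simp
          qed
          have H0A: "H0 \<in> A" unfolding H0_def using IHapp v by blast
          have H1A: "H1 \<in> A" unfolding H1_def using IHapp z by blast
          have finH0: "finite H0" using finH by (simp add: H0_def)
          have cXH0: "card (X - H0 - {w} - {z}) = n - d - 2"
          proof -
            have "H0 \<subseteq> X" using H vX by (auto simp: H0_def)
            moreover have "card H0 = d" using H w v finH d2 by (simp add: H0_def)
            ultimately have "card (X - H0) = n - d" using X finH0 by (simp add: card_Diff_subset)
            moreover have "w \<in> X - H0" using wX vX by (auto simp: H0_def)
            moreover have "z \<in> X - H0 - {w}" using zX z by (auto simp: H0_def)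
            ultimately show ?thesis using X by (simp add: card_Diff_singleton)
          qed
          have "d - 1 \<le> card (X - H0 - {w} - {z})" using cXH0 d by simp
          then obtain V where V: "V \<subseteq> X - H0 - {w} - {z}" "card V = d - 1" "finite V"
            by (rule obtain_subset_with_card_n)
          have "insert v V \<notin> A"
          proof
            assume "insert v V \<in> A"
            then have "insert v V \<inter> H1 \<noteq> {}" using H1A A(2) unfolding intersecting_def by blast
            moreover have "insert v V \<inter> H1 = {}" using V v vX by (auto simp: H1_def H0_def)
            ultimately show False by simp
          qed
          moreover have "v \<in> H0" "w \<in> X - H0" "V \<subseteq> X - H0 - {w}"
            using wX vX V by (auto simp: H0_def)
          ultimately have "insert w (H0 - {v}) \<in> A" using S[OF H0A, of v w V] V(2) by blast
          moreover have "insert w (H0 - {v}) = H" using w v by (auto simp: H0_def)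
          ultimately show ?thesis by simp
        qed
      qed
    qed
    have "D \<in> A" if D: "D \<subseteq> X \<and> card D = d \<and> a \<in> D" for D
    proof -
      have finD: "finite D" using D X finite_subset by blast
      have "card (D - insert a W) \<le> card D" using finD by (simp add: card_mono)
      then show ?thesis using main[of "card D"] D by blast
    qed
    then show ?thesis using aX by blast
  qed
qed

definition part :: "nat \<Rightarrow> nat \<Rightarrow> nat \<Rightarrow> nat \<Rightarrow> nat \<Rightarrow> nat set set" where
  "part m n k e t = {A \<union> B \<union> {t} | A B. A \<in> ksubsets ({1..n} - {t}) (e - 1) \<and> B \<in> ksubsets {n+1..m} (k - e)}"

lemma card_ksubsets: "finite S \<Longrightarrow> card (ksubsets S j) = card S choose j"
  unfolding ksubsets_def by (rule n_subsets)

lemma finite_ksubsets: "finite S \<Longrightarrow> finite (ksubsets S j)"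
  unfolding ksubsets_def by simp

lemma split_XY:
  fixes G :: "nat set"
  assumes "G \<subseteq> {1..m}" "n \<le> m"
  shows "G = (G \<inter> {1..n}) \<union> (G \<inter> {n+1..m})" "card G = card (G \<inter> {1..n}) + card (G \<inter> {n+1..m})"
proof -
  have "\<forall>x\<in>G. 1 \<le> x \<and> x \<le> m" using assms(1) by auto
  then show e: "G = (G \<inter> {1..n}) \<union> (G \<inter> {n+1..m})" by auto
  have "finite G" using assms(1) finite_subset by blast
  then have "card ((G \<inter> {1..n}) \<union> (G \<inter> {n+1..m})) = card (G \<inter> {1..n}) + card (G \<inter> {n+1..m})"
    by (intro card_Un_disjoint) auto
  then show "card G = card (G \<inter> {1..n}) + card (G \<inter> {n+1..m})" using e by simp
qed

lemma part_img:
  "part m n k e t = (\<lambda>(A, B). A \<union> B \<union> {t}) ` (ksubsets ({1..n} - {t}) (e - 1) \<times> ksubsets {n+1..m} (k - e))"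
proof (intro equalityI subsetI)
  fix G assume "G \<in> part m n k e t"
  then obtain A B where AB: "G = A \<union> B \<union> {t}" "A \<in> ksubsets ({1..n} - {t}) (e - 1)" "B \<in> ksubsets {n+1..m} (k - e)"
    unfolding part_def by blast
  then show "G \<in> (\<lambda>(A, B). A \<union> B \<union> {t}) ` (ksubsets ({1..n} - {t}) (e - 1) \<times> ksubsets {n+1..m} (k - e))"
    by (intro image_eqI[of _ _ "(A, B)"]) auto
next
  fix G assume "G \<in> (\<lambda>(A, B). A \<union> B \<union> {t}) ` (ksubsets ({1..n} - {t}) (e - 1) \<times> ksubsets {n+1..m} (k - e))"
  then obtain A B where AB: "G = A \<union> B \<union> {t}" "A \<in> ksubsets ({1..n} - {t}) (e - 1)" "B \<in> ksubsets {n+1..m} (k - e)"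
    by auto
  then show "G \<in> part m n k e t" unfolding part_def by blast
qed

lemma part_mem:
  assumes "G \<in> part m n k e t" "t \<in> {1..n}" "1 \<le> e" "e \<le> k" "n \<le> m"
  shows "G \<subseteq> {1..m}" "t \<in> G" "card G = k" "G \<inter> {1..n} = G - {n+1..m}" "card (G \<inter> {1..n}) = e"
    "G \<inter> {n+1..m} = G - {1..n}"
proof -
  obtain A B where AB: "G = A \<union> B \<union> {t}" "A \<subseteq> {1..n} - {t}" "card A = e - 1" "B \<subseteq> {n+1..m}" "card B = k - e"
    using assms(1) unfolding part_def ksubsets_def by blast
  show "G \<subseteq> {1..m}" using AB assms by auto
  show "t \<in> G" using AB by auto
  have GX: "G \<inter> {1..n} = insert t A" using AB assms(2) by auto
  have finA: "finite A" "finite B" using AB(2,4) by (auto intro: finite_subset)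
  have "t \<notin> A" using AB by auto
  then show cGX: "card (G \<inter> {1..n}) = e" using GX finA AB assms(3) by simp
  have GY: "G \<inter> {n+1..m} = B" using AB assms(2) by auto
  show "G \<inter> {1..n} = G - {n+1..m}" "G \<inter> {n+1..m} = G - {1..n}" using \<open>G \<subseteq> {1..m}\<close> by auto
  show "card G = k" using split_XY[OF \<open>G \<subseteq> {1..m}\<close> assms(5)] cGX GY AB assms(3,4) by simp
qed

lemma part_intro:
  assumes "G \<subseteq> {1..m}" "t \<in> G" "card G = k" "card (G \<inter> {1..n}) = e" "t \<in> {1..n}" "n \<le> m"
  shows "G \<in> part m n k e t"
proof -
  let ?A = "G \<inter> {1..n} - {t}" and ?B = "G \<inter> {n+1..m}"
  have fin: "finite (G \<inter> {1..n})" by simp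
  have "G = ?A \<union> ?B \<union> {t}" using split_XY(1)[OF assms(1) assms(6)] assms(2,5) by auto
  moreover have "?A \<in> ksubsets ({1..n} - {t}) (e - 1)"
    using assms(2,4,5) fin by (auto simp: ksubsets_def)
  moreover have "?B \<in> ksubsets {n+1..m} (k - e)"
    using split_XY(2)[OF assms(1) assms(6)] assms(3,4) by (auto simp: ksubsets_def)
  ultimately show ?thesis unfolding part_def by blast
qed

lemma card_part:
  assumes "t \<in> {1..n}" "n \<le> m"
  shows "card (part m n k e t) = (n - 1 choose (e - 1)) * (m - n choose (k - e))"
proof -
  let ?D = "ksubsets ({1..n} - {t}) (e - 1) \<times> ksubsets {n+1..m} (k - e)"
  have inj: "inj_on (\<lambda>(A, B). A \<union> B \<union> {t}) ?D"
  proof (rule inj_onI)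
    fix p q assume pq: "p \<in> ?D" "q \<in> ?D" "(\<lambda>(A, B). A \<union> B \<union> {t}) p = (\<lambda>(A, B). A \<union> B \<union> {t}) q"
    obtain A B where p: "p = (A, B)" by (cases p)
    obtain A' B' where q: "q = (A', B')" by (cases q)
    have h: "A \<subseteq> {1..n} - {t}" "B \<subseteq> {n+1..m}" "A' \<subseteq> {1..n} - {t}" "B' \<subseteq> {n+1..m}"
      using pq(1,2) p q by (auto simp: ksubsets_def)
    have e: "A \<union> B \<union> {t} = A' \<union> B' \<union> {t}" using pq(3) p q by simp
    have "A = (A \<union> B \<union> {t}) \<inter> ({1..n} - {t})" using h by auto
    also have "\<dots> = (A' \<union> B' \<union> {t}) \<inter> ({1..n} - {t})" using e by simp
    also have "\<dots> = A'" using h by auto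
    finally have "A = A'" .
    moreover have "B = (A \<union> B \<union> {t}) \<inter> {n+1..m}" using h assms(1) by auto
    moreover have "B' = (A' \<union> B' \<union> {t}) \<inter> {n+1..m}" using h assms(1) by auto
    ultimately show "p = q" using p q e by simp
  qed
  have "card (part m n k e t) = card ?D" unfolding part_img using card_image[OF inj] .
  also have "\<dots> = (n - 1 choose (e - 1)) * (m - n choose (k - e))"
    using assms by (simp add: card_cartesian_product card_ksubsets)
  finally show ?thesis .
qed

lemma adm_facts:
  assumes "G \<in> admissible m n k c d"
  shows "G \<subseteq> {1..m}" "card G = k" "card (G \<inter> {1..n}) = c \<or> card (G \<inter> {1..n}) = d"
  using assms unfolding admissible_def ksubsets_def by auto

lemma finite_adm: "finite (admissible m n k c d)"
proof -
  have "admissible m n k c d \<subseteq> Pow {1..m}" unfolding admissible_def ksubsets_def by auto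
  then show ?thesis by (rule finite_subset) simp
qed

lemma star_props:
  assumes t: "t \<in> {1..n}" and nm: "n \<le> m" and p: "1 \<le> d" "d < c" "c < k"
  shows "part m n k c t \<union> part m n k d t \<subseteq> admissible m n k c d"
    "intersecting (part m n k c t \<union> part m n k d t)"
    "card (part m n k c t \<union> part m n k d t) = (n - 1 choose (c - 1)) * (m - n choose (k - c))
        + (n - 1 choose (d - 1)) * (m - n choose (k - d))"
proof -
  have mem: "G \<subseteq> {1..m} \<and> t \<in> G \<and> card G = k \<and> card (G \<inter> {1..n}) = e"
    if "G \<in> part m n k e t" "1 \<le> e" "e \<le> k" for G e
    using part_mem[OF that(1) t that(2,3) nm] by blast
  show "part m n k c t \<union> part m n k d t \<subseteq> admissible m n k c d"
  proof
    fix G assume "G \<in> part m n k c t \<union> part m n k d t"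
    then have "G \<subseteq> {1..m} \<and> card G = k \<and> (card (G \<inter> {1..n}) = c \<or> card (G \<inter> {1..n}) = d)"
      using mem[of G c] mem[of G d] p by auto
    then show "G \<in> admissible m n k c d" unfolding admissible_def ksubsets_def by auto
  qed
  show "intersecting (part m n k c t \<union> part m n k d t)"
    unfolding intersecting_def
  proof (intro ballI)
    fix A B assume "A \<in> part m n k c t \<union> part m n k d t" "B \<in> part m n k c t \<union> part m n k d t"
    then have "t \<in> A" "t \<in> B" using mem[of A c] mem[of A d] mem[of B c] mem[of B d] p by auto
    then show "A \<inter> B \<noteq> {}" by auto
  qed
  have fin: "finite (part m n k e t)" for e
    unfolding part_img by (intro finite_imageI finite_cartesian_product finite_ksubsets) auto
  have disj: "part m n k c t \<inter> part m n k d t = {}"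
  proof (rule ccontr)
    assume "part m n k c t \<inter> part m n k d t \<noteq> {}"
    then obtain G where "G \<in> part m n k c t" "G \<in> part m n k d t" by blast
    then have "card (G \<inter> {1..n}) = c" "card (G \<inter> {1..n}) = d" using mem[of G c] mem[of G d] p by auto
    then show False using p by simp
  qed
  show "card (part m n k c t \<union> part m n k d t) = (n - 1 choose (c - 1)) * (m - n choose (k - c))
        + (n - 1 choose (d - 1)) * (m - n choose (k - d))"
    using card_Un_disjoint[OF fin fin disj] card_part[OF t nm] by simp
qed

lemma few_ext:
  fixes F :: "nat set set"
  assumes nm: "n \<le> m" and F: "F \<subseteq> admissible m n k c d" "intersecting F" and p: "d \<le> c" "d < k"
    and D: "D \<subseteq> {1..n}" "card D = d" and G2: "G2 \<in> F" "G2 \<inter> D = {}"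
  shows "card {G \<in> F. G \<inter> {1..n} = D} \<le> (k - d) * (m - n - 1 choose (k - d - 1))"
proof -
  let ?X = "{1..n}" and ?Y = "{n+1..m}"
  let ?FD = "{G \<in> F. G \<inter> ?X = D}"
  let ?B2 = "G2 \<inter> ?Y"
  let ?P = "m - n - 1 choose (k - d - 1)"
  have "G2 \<in> admissible m n k c d" using G2 F by auto
  note G2a = adm_facts[OF this]
  have cB2: "card ?B2 \<le> k - d" using split_XY(2)[OF G2a(1) nm] G2a p by auto
  have finB2: "finite ?B2" by simp
  have inj: "inj_on (\<lambda>G. G \<inter> ?Y) ?FD"
  proof (rule inj_onI)
    fix G G' assume h: "G \<in> ?FD" "G' \<in> ?FD" "G \<inter> ?Y = G' \<inter> ?Y"
    have "G \<in> admissible m n k c d" "G' \<in> admissible m n k c d" using h(1,2) F by auto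
    then have "G \<subseteq> {1..m}" "G' \<subseteq> {1..m}" using adm_facts(1) by blast+
    then show "G = G'" using split_XY(1)[of G m n] split_XY(1)[of G' m n] h nm by auto
  qed
  have sub: "(\<lambda>G. G \<inter> ?Y) ` ?FD \<subseteq> (\<Union>y\<in>?B2. {B \<in> ksubsets ?Y (k - d). y \<in> B})"
  proof
    fix B assume "B \<in> (\<lambda>G. G \<inter> ?Y) ` ?FD"
    then obtain G where G: "G \<in> F" "G \<inter> ?X = D" "B = G \<inter> ?Y" by auto
    have "G \<in> admissible m n k c d" using G F by auto
    note Ga = adm_facts[OF this]
    have cB: "card B = k - d" using split_XY(2)[OF Ga(1) nm] Ga G D by simp
    have "G \<inter> G2 \<noteq> {}" using F(2) G(1) G2(1) unfolding intersecting_def by blast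
    then obtain z where z: "z \<in> G" "z \<in> G2" by blast
    have "z \<notin> ?X" using z G(2) G2(2) by auto
    then have "z \<in> ?Y" using z Ga(1) by auto
    then have "z \<in> ?B2" "z \<in> B" using z G(3) by auto
    then show "B \<in> (\<Union>y\<in>?B2. {B \<in> ksubsets ?Y (k - d). y \<in> B})"
      using cB G(3) by (auto simp: ksubsets_def)
  qed
  have each: "card {B \<in> ksubsets ?Y (k - d). y \<in> B} \<le> ?P" if y: "y \<in> ?B2" for y
  proof -
    have "{B \<in> ksubsets ?Y (k - d). y \<in> B} \<subseteq> insert y ` ksubsets (?Y - {y}) (k - d - 1)"
    proof
      fix B assume B: "B \<in> {B \<in> ksubsets ?Y (k - d). y \<in> B}"
      have finB: "finite B" using B by (auto simp: ksubsets_def intro: finite_subset)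
      have "B - {y} \<in> ksubsets (?Y - {y}) (k - d - 1)" using B finB by (auto simp: ksubsets_def)
      moreover have "B = insert y (B - {y})" using B by auto
      ultimately show "B \<in> insert y ` ksubsets (?Y - {y}) (k - d - 1)" by blast
    qed
    then have "card {B \<in> ksubsets ?Y (k - d). y \<in> B} \<le> card (insert y ` ksubsets (?Y - {y}) (k - d - 1))"
      by (rule card_mono[rotated]) (simp add: finite_ksubsets)
    also have "\<dots> \<le> card (ksubsets (?Y - {y}) (k - d - 1))" by (rule card_image_le) (simp add: finite_ksubsets)
    also have "\<dots> = ?P" using y by (simp add: card_ksubsets)
    finally show ?thesis .
  qed
  have "card ?FD = card ((\<lambda>G. G \<inter> ?Y) ` ?FD)" using card_image[OF inj] by simp
  also have "\<dots> \<le> card (\<Union>y\<in>?B2. {B \<in> ksubsets ?Y (k - d). y \<in> B})"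
    by (rule card_mono[OF _ sub]) (simp add: finite_ksubsets)
  also have "\<dots> \<le> (\<Sum>y\<in>?B2. card {B \<in> ksubsets ?Y (k - d). y \<in> B})" by (rule card_UN_le[OF finB2])
  also have "\<dots> \<le> (\<Sum>y\<in>?B2. ?P)" by (rule sum_mono) (rule each)
  also have "\<dots> = card ?B2 * ?P" by simp
  also have "\<dots> \<le> (k - d) * ?P" using cB2 by simp
  finally show ?thesis .
qed

lemma upper:
  fixes F :: "nat set set" and L :: nat
  assumes nm: "n \<le> m" and F: "F \<subseteq> admissible m n k c d" and p: "d < c" "c < k"
  defines "Big \<equiv> {D \<in> ksubsets {1..n} d. L < card {G \<in> F. G \<inter> {1..n} = D}}"
  shows "card F \<le> (n choose c) * (m - n choose (k - c)) + card Big * (m - n choose (k - d)) + (n choose d) * L"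
proof -
  let ?X = "{1..n}" and ?Y = "{n+1..m}"
  define Fc where "Fc = (\<Union>C\<in>ksubsets ?X c. (\<lambda>B. C \<union> B) ` ksubsets ?Y (k - c))"
  define Fb where "Fb = (\<Union>D\<in>Big. (\<lambda>B. D \<union> B) ` ksubsets ?Y (k - d))"
  define Fs where "Fs = (\<Union>D\<in>ksubsets ?X d - Big. {G \<in> F. G \<inter> ?X = D})"
  have finF: "finite F" using F finite_adm finite_subset by blast
  have BigS: "Big \<subseteq> ksubsets ?X d" unfolding Big_def by auto
  have finBig: "finite Big" using BigS finite_ksubsets[of ?X d] finite_subset by blast
  have sub: "F \<subseteq> Fc \<union> Fb \<union> Fs"
  proof
    fix G assume G: "G \<in> F"
    then have "G \<in> admissible m n k c d" using F by auto
    note Ga = adm_facts[OF this]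
    have GXY: "G = (G \<inter> ?X) \<union> (G \<inter> ?Y)" using split_XY(1)[OF Ga(1) nm] .
    have cG: "card G = card (G \<inter> ?X) + card (G \<inter> ?Y)" using split_XY(2)[OF Ga(1) nm] .
    show "G \<in> Fc \<union> Fb \<union> Fs"
    proof (cases "card (G \<inter> ?X) = c")
      case True
      have "G \<inter> ?X \<in> ksubsets ?X c" "G \<inter> ?Y \<in> ksubsets ?Y (k - c)"
        using True cG Ga by (auto simp: ksubsets_def)
      then have "G \<in> Fc" unfolding Fc_def using GXY by blast
      then show ?thesis by blast
    next
      case False
      then have cd: "card (G \<inter> ?X) = d" using Ga by auto
      have XD: "G \<inter> ?X \<in> ksubsets ?X d" using cd by (auto simp: ksubsets_def)
      show ?thesis
      proof (cases "G \<inter> ?X \<in> Big")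
        case True
        have "G \<inter> ?Y \<in> ksubsets ?Y (k - d)" using cd cG Ga by (auto simp: ksubsets_def)
        then have "G \<in> Fb" unfolding Fb_def using GXY True by blast
        then show ?thesis by blast
      next
        case False
        then have "G \<in> Fs" unfolding Fs_def using XD G by blast
        then show ?thesis by blast
      qed
    qed
  qed
  have finFc: "finite Fc" unfolding Fc_def by (intro finite_UN_I finite_imageI finite_ksubsets) auto
  have finFb: "finite Fb" unfolding Fb_def using finBig by (intro finite_UN_I finite_imageI finite_ksubsets) auto
  have finFs: "finite Fs" unfolding Fs_def using finF
    by (intro finite_UN_I finite_Diff finite_ksubsets) auto
  have cFc: "card Fc \<le> (n choose c) * (m - n choose (k - c))"
  proof -
    have "card Fc \<le> (\<Sum>C\<in>ksubsets ?X c. card ((\<lambda>B. C \<union> B) ` ksubsets ?Y (k - c)))"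
      unfolding Fc_def by (rule card_UN_le) (simp add: finite_ksubsets)
    also have "\<dots> \<le> (\<Sum>C\<in>ksubsets ?X c. (m - n choose (k - c)))"
    proof (rule sum_mono)
      fix C assume "C \<in> ksubsets ?X c"
      have "card ((\<lambda>B. C \<union> B) ` ksubsets ?Y (k - c)) \<le> card (ksubsets ?Y (k - c))"
        by (rule card_image_le) (simp add: finite_ksubsets)
      then show "card ((\<lambda>B. C \<union> B) ` ksubsets ?Y (k - c)) \<le> (m - n choose (k - c))"
        by (simp add: card_ksubsets)
    qed
    also have "\<dots> = (n choose c) * (m - n choose (k - c))" by (simp add: card_ksubsets)
    finally show ?thesis .
  qed
  have cFb: "card Fb \<le> card Big * (m - n choose (k - d))"
  proof -
    have "card Fb \<le> (\<Sum>D\<in>Big. card ((\<lambda>B. D \<union> B) ` ksubsets ?Y (k - d)))"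
      unfolding Fb_def by (rule card_UN_le[OF finBig])
    also have "\<dots> \<le> (\<Sum>D\<in>Big. (m - n choose (k - d)))"
    proof (rule sum_mono)
      fix D assume "D \<in> Big"
      have "card ((\<lambda>B. D \<union> B) ` ksubsets ?Y (k - d)) \<le> card (ksubsets ?Y (k - d))"
        by (rule card_image_le) (simp add: finite_ksubsets)
      then show "card ((\<lambda>B. D \<union> B) ` ksubsets ?Y (k - d)) \<le> (m - n choose (k - d))"
        by (simp add: card_ksubsets)
    qed
    also have "\<dots> = card Big * (m - n choose (k - d))" by simp
    finally show ?thesis .
  qed
  have cFs: "card Fs \<le> (n choose d) * L"
  proof -
    have fin2: "finite (ksubsets ?X d - Big)" by (simp add: finite_ksubsets)
    have "card Fs \<le> (\<Sum>D\<in>ksubsets ?X d - Big. card {G \<in> F. G \<inter> ?X = D})"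
      unfolding Fs_def by (rule card_UN_le[OF fin2])
    also have "\<dots> \<le> (\<Sum>D\<in>ksubsets ?X d - Big. L)"
    proof (rule sum_mono)
      fix D assume "D \<in> ksubsets ?X d - Big"
      then show "card {G \<in> F. G \<inter> ?X = D} \<le> L" unfolding Big_def by auto
    qed
    also have "\<dots> = card (ksubsets ?X d - Big) * L" by simp
    also have "\<dots> \<le> card (ksubsets ?X d) * L"
      by (intro mult_le_mono1 card_mono) (auto simp: finite_ksubsets)
    also have "\<dots> = (n choose d) * L" by (simp add: card_ksubsets)
    finally show ?thesis .
  qed
  have "card F \<le> card (Fc \<union> Fb \<union> Fs)" by (rule card_mono[OF _ sub]) (use finFc finFb finFs in simp)
  also have "\<dots> \<le> card Fc + card Fb + card Fs"
    using card_Un_le[of "Fc \<union> Fb" Fs] card_Un_le[of Fc Fb] by simp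
  finally show ?thesis using cFc cFb cFs by simp
qed

lemma arith_contra:
  fixes N r s K1 K2 :: nat
  assumes "1 \<le> s" "s < r" "2*r \<le> N" "r * (2*K1 + K2*r) < N"
    and h: "(N choose r) \<le> K1 * (N choose s) + K2 * (r * (N - 1 choose (r - 1)))"
  shows False
proof -
  let ?P = "N - 1 choose (r - 1)"
  have Ppos: "?P > 0" using assms by simp
  have e1: "r * (N choose r) = N * ?P"
    using Suc_times_binomial_eq[of "N - 1" "r - 1"] assms by (simp add: ac_simps)
  have c1: "(N - 1 choose (s - 1)) \<le> ?P" by (rule binomial_mono) (use assms in auto)
  have c2: "(N - 1 choose s) \<le> ?P" by (rule binomial_mono) (use assms in auto)
  have "N choose s = (N - 1 choose (s - 1)) + (N - 1 choose s)"
    using binomial_Suc_Suc[of "N - 1" "s - 1"] assms by simp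
  then have c3: "N choose s \<le> 2 * ?P" using c1 c2 by simp
  have "N * ?P = r * (N choose r)" using e1 by simp
  also have "\<dots> \<le> r * (K1 * (N choose s) + K2 * (r * ?P))" using h by simp
  also have "\<dots> \<le> r * (K1 * (2 * ?P) + K2 * (r * ?P))" using c3 by (intro mult_le_mono2 add_mono mult_le_mono2) auto
  also have "\<dots> = (r * (2*K1 + K2*r)) * ?P" by (simp add: algebra_simps)
  finally have "N * ?P \<le> (r * (2*K1 + K2*r)) * ?P" .
  then have "N \<le> r * (2*K1 + K2*r)" using Ppos by simp
  then show False using assms by simp
qed

lemma nat_ineq_aux: "b + 1 \<le> a \<Longrightarrow> a * x \<le> y + b * x + z \<Longrightarrow> x \<le> (y::nat) + z"
proof -
  assume h: "b + 1 \<le> a" "a * x \<le> y + b * x + z"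
  have "(b + 1) * x \<le> a * x" using h(1) by (rule mult_le_mono1)
  then have "b * x + x \<le> y + b * x + z" using h(2) by (simp add: algebra_simps)
  then show ?thesis by simp
qed

theorem lemma13:
  fixes n k c d :: nat
  assumes "k \<le> n" and "n + 3 < 2 * k" and "d < c" and "c < k" and "c + d = n"
  shows "\<exists>M. \<forall>m\<ge>M. \<forall>\<F>. max_intersecting m n k c d \<F> \<longrightarrow>
           (\<exists>t\<in>{1..n}. \<F> =
              {A \<union> B \<union> {t} | A B. A \<in> ksubsets ({1..n} - {t}) (c - 1) \<and> B \<in> ksubsets {n+1..m} (k - c)}
            \<union> {A \<union> B \<union> {t} | A B. A \<in> ksubsets ({1..n} - {t}) (d - 1) \<and> B \<in> ksubsets {n+1..m} (k - d)})
           \<and> card \<F> = (n - 1 choose (c - 1)) * (m - n choose (k - c))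
                      + (n - 1 choose (d - 1)) * (m - n choose (k - d))"
proof -
  have d1: "1 \<le> d" using assms by linarith
  have n2d: "2*d + 1 \<le> n" using assms by linarith
  define r where "r = k - d"
  define s where "s = k - c"
  have rs: "1 \<le> s" "s < r" using assms by (auto simp: r_def s_def)
  define K1 where "K1 = n choose c"
  define K2 where "K2 = n choose d"
  define M where "M = n + r * (2*K1 + K2*r) + 2*r + 1"
  show ?thesis
  proof (intro exI[of _ M] allI impI)
    fix m F assume m: "M \<le> m" and F: "max_intersecting m n k c d F"
    have nm: "n \<le> m" using m by (simp add: M_def)
    define N where "N = m - n"
    have N: "2*r \<le> N" "r * (2*K1 + K2*r) < N" using m by (auto simp: M_def N_def)
    have Fa: "F \<subseteq> admissible m n k c d" and Fi: "intersecting F"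
      and Fmax: "\<And>G. G \<subseteq> admissible m n k c d \<Longrightarrow> intersecting G \<Longrightarrow> card G \<le> card F"
      using F unfolding max_intersecting_def by auto
    let ?X = "{1..n}"
    have n1: "1 \<in> ?X" using assms by simp
    have dc: "d < c" "c < k" using assms by auto
    note sp1 = star_props[OF n1 nm d1 dc]
    have "card (part m n k c 1 \<union> part m n k d 1) \<le> card F" using Fmax sp1(1,2) by blast
    then have lowF: "(n - 1 choose (d - 1)) * (N choose r) \<le> card F"
      using sp1(3) by (simp add: r_def N_def)
    define L where "L = r * (N - 1 choose (r - 1))"
    define Big where "Big = {D \<in> ksubsets ?X d. L < card {G \<in> F. G \<inter> ?X = D}}"
    have upF: "card F \<le> K1 * (N choose s) + card Big * (N choose r) + K2 * L"
      using upper[OF nm Fa dc, of L] unfolding Big_def K1_def K2_def N_def r_def s_def by simp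
    have KL: "card {G \<in> F. G \<inter> ?X = D} \<le> L"
      if "D \<subseteq> ?X" "card D = d" "G2 \<in> F" "G2 \<inter> D = {}" for D G2
    proof -
      have "d \<le> c" "d < k" using assms by auto
      from few_ext[OF nm Fa Fi this that] show ?thesis by (simp add: L_def r_def N_def)
    qed
    have BigS: "Big \<subseteq> ksubsets ?X d" unfolding Big_def by auto
    have BigI: "intersecting Big"
      unfolding intersecting_def
    proof (intro ballI)
      fix D1 D2 assume D: "D1 \<in> Big" "D2 \<in> Big"
      show "D1 \<inter> D2 \<noteq> {}"
      proof
        assume dis: "D1 \<inter> D2 = {}"
        have D1X: "D1 \<subseteq> ?X" "card D1 = d" using D(1) by (auto simp: Big_def ksubsets_def)
        have "L < card {G \<in> F. G \<inter> ?X = D2}" using D(2) by (simp add: Big_def)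
        then have "{G \<in> F. G \<inter> ?X = D2} \<noteq> {}" by (metis card.empty not_less0)
        then obtain G2 where G2: "G2 \<in> F" "G2 \<inter> ?X = D2" by blast
        have "G2 \<inter> D1 = {}" using G2(2) dis D1X(1) by blast
        then have "card {G \<in> F. G \<inter> ?X = D1} \<le> L" using KL[OF D1X G2(1)] by simp
        moreover have "L < card {G \<in> F. G \<inter> ?X = D1}" using D(1) by (simp add: Big_def)
        ultimately show False by simp
      qed
    qed
    have cBig: "(n - 1 choose (d - 1)) \<le> card Big"
    proof (rule ccontr)
      assume "\<not> (n - 1 choose (d - 1)) \<le> card Big"
      then have "card Big + 1 \<le> (n - 1 choose (d - 1))" by simp
      moreover have "(n - 1 choose (d - 1)) * (N choose r) \<le> K1 * (N choose s) + card Big * (N choose r) + K2 * L"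
        using lowF upF by simp
      ultimately have "(N choose r) \<le> K1 * (N choose s) + K2 * L" by (rule nat_ineq_aux)
      then have "(N choose r) \<le> K1 * (N choose s) + K2 * (r * (N - 1 choose (r - 1)))" by (simp add: L_def)
      then show False by (rule arith_contra[OF rs N])
    qed
    have finX: "finite ?X" "card ?X = n" by auto
    obtain t where t: "t \<in> ?X" "\<And>D. D \<subseteq> ?X \<and> card D = d \<and> t \<in> D \<Longrightarrow> D \<in> Big"
      using ekr_star[OF finX d1 n2d BigS BigI cBig] by blast
    have tin: "t \<in> G" if G: "G \<in> F" for G
    proof (rule ccontr)
      assume tG: "t \<notin> G"
      have "G \<in> admissible m n k c d" using G Fa by auto
      note Ga = adm_facts[OF this]
      let ?Q = "G \<inter> ?X"
      have cQ: "card ?Q \<le> c" using Ga(3) assms by auto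
      have c1: "card (?X - ?Q) = n - card ?Q" by (simp add: card_Diff_subset)
      have tXQ: "t \<in> ?X - ?Q" using t(1) tG by auto
      have "card (?X - ?Q - {t}) = card (?X - ?Q) - 1" using card_Diff_singleton[OF tXQ] .
      then have "card (?X - ?Q - {t}) = n - card ?Q - 1" using c1 by simp
      then have "d - 1 \<le> card (?X - ?Q - {t})" using cQ assms by simp
      then obtain R where R: "R \<subseteq> ?X - ?Q - {t}" "card R = d - 1" "finite R"
        by (rule obtain_subset_with_card_n)
      define D where "D = insert t R"
      have tR: "t \<notin> R" using R(1) by blast
      have DX: "D \<subseteq> ?X" "card D = d" "t \<in> D" using R t(1) d1 tR by (auto simp: D_def)
      have "D \<in> Big" using t(2) DX by blast
      then have "L < card {G \<in> F. G \<inter> ?X = D}" by (simp add: Big_def)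
      moreover have "G \<inter> D = {}" using R tG by (auto simp: D_def)
      then have "card {G \<in> F. G \<inter> ?X = D} \<le> L" using KL[OF DX(1,2) G] by simp
      ultimately show False by simp
    qed
    let ?S = "part m n k c t \<union> part m n k d t"
    note spt = star_props[OF t(1) nm d1 dc]
    have FS: "F \<subseteq> ?S"
    proof
      fix G assume G: "G \<in> F"
      have "G \<in> admissible m n k c d" using G Fa by auto
      note Ga = adm_facts[OF this]
      have "G \<in> part m n k (card (G \<inter> ?X)) t"
        by (rule part_intro[OF Ga(1) tin[OF G] Ga(2) refl t(1) nm])
      then show "G \<in> ?S" using Ga(3) by auto
    qed
    have cS: "card ?S \<le> card F" using Fmax spt(1,2) by blast
    have finS: "finite ?S" using spt(1) finite_adm finite_subset by blast
    have FeqS: "F = ?S" using card_seteq[OF finS FS cS] .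
    have "F = {A \<union> B \<union> {t} | A B. A \<in> ksubsets ({1..n} - {t}) (c - 1) \<and> B \<in> ksubsets {n+1..m} (k - c)}
            \<union> {A \<union> B \<union> {t} | A B. A \<in> ksubsets ({1..n} - {t}) (d - 1) \<and> B \<in> ksubsets {n+1..m} (k - d)}"
      using FeqS by (simp add: part_def)
    moreover have "card F = (n - 1 choose (c - 1)) * (m - n choose (k - c))
                      + (n - 1 choose (d - 1)) * (m - n choose (k - d))"
      using FeqS spt(3) by simp
    ultimately show "(\<exists>t\<in>{1..n}. F =
              {A \<union> B \<union> {t} | A B. A \<in> ksubsets ({1..n} - {t}) (c - 1) \<and> B \<in> ksubsets {n+1..m} (k - c)}
            \<union> {A \<union> B \<union> {t} | A B. A \<in> ksubsets ({1..n} - {t}) (d - 1) \<and> B \<in> ksubsets {n+1..m} (k - d)})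
           \<and> card F = (n - 1 choose (c - 1)) * (m - n choose (k - c))
                      + (n - 1 choose (d - 1)) * (m - n choose (k - d))"
      using t(1) by blast
  qed
qed

end
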